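(* Let $c$ be a prime of the form $2^r\cdot 3+1$ ($r\ge 1$), and let $a,b>1$ be integers with $a,b,c$ pairwise coprime and $e_c(b)=3$. Suppose positive integers $z,Y,Z$ with $z\le Z$ and $Y\equiv 4\pmod 6$ satisfy $a+b=c^z$ and $a+b^Y=c^Z$. Write $Y=1+3N$ ($N$ odd) and $e=\nu_c(N)$, and let $I(t)=\sum_{j=0}^{N-1}t^{3j}\in\mathbb Z[t]$. Then $e<z$ and there is a positive integer $K$ with $\gcd(K,c)=1$ such that \[ b^2+b+1=K\,c^{z-e},\qquad b(b-1)\,I(b)\,K=c^e(c^{Z-z}-1). \]
   Context: For a positive integer $M$ and an integer $A$ coprime to $M$, $e_M(A)$ denotes the least positive integer $e$ such that $A^e\equiv 1$ or $A^e\equiv -1\pmod M$. $\nu_c$ is the $c$-adic valuation. *)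

theory Defs
  imports "HOL-Number_Theory.Number_Theory" "HOL-Computational_Algebra.Polynomial"
begin

definition e_pm :: "int \<Rightarrow> int \<Rightarrow> nat" where
  "e_pm M A = (LEAST e. e > 0 \<and> ([A ^ e = 1] (mod M) \<or> [A ^ e = -1] (mod M)))"

definition I_poly :: "nat \<Rightarrow> int poly" where
  "I_poly N = (\<Sum>j<N. monom 1 (3 * j))"

end

theory Submission imports Defs begin

lemma geom_split:
  fixes x :: int
  shows "(\<Sum>j<m*q. x^j) = (\<Sum>j<m. x^j) * (\<Sum>i<q. (x^m)^i)"
proof (cases "x = 1")
  case True then show ?thesis by simp
next
  case False
  have "(x - 1) * (\<Sum>j<m*q. x^j) = x^(m*q) - 1" by (simp add: power_diff_1_eq)
  also have "\<dots> = (x^m)^q - 1" by (simp add: power_mult)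
  also have "\<dots> = (x^m - 1) * (\<Sum>i<q. (x^m)^i)" by (simp add: power_diff_1_eq)
  also have "\<dots> = (x - 1) * ((\<Sum>j<m. x^j) * (\<Sum>i<q. (x^m)^i))" by (simp add: power_diff_1_eq)
  finally show ?thesis using False by simp
qed

lemma pow_cong2:
  fixes p t :: int
  shows "p^2 dvd (1 + t*p)^i - 1 - int i * t * p"
proof (induction i)
  case 0 then show ?case by simp
next
  case (Suc i)
  then obtain k where k: "(1 + t*p)^i - 1 - int i * t * p = p^2 * k" by blast
  have "(1 + t*p)^Suc i - 1 - int (Suc i) * t * p = p^2 * (int i * t^2 + k * (1 + t*p))"
    using k by (simp add: algebra_simps power2_eq_square)
  then show ?case by simp
qed

lemma sum_cong2:
  fixes p t :: int
  shows "p^2 dvd 2 * (\<Sum>i<n. (1 + t*p)^i) - 2 * int n - t * p * int n * (int n - 1)"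
proof (induction n)
  case 0 then show ?case by simp
next
  case (Suc n)
  have a: "p^2 dvd 2 * ((1 + t*p)^n - 1 - int n * t * p)" using pow_cong2 by (rule dvd_mult)
  have eq: "2 * (\<Sum>i<Suc n. (1 + t*p)^i) - 2 * int (Suc n) - t * p * int (Suc n) * (int (Suc n) - 1)
     = (2 * (\<Sum>i<n. (1 + t*p)^i) - 2 * int n - t * p * int n * (int n - 1)) + 2 * ((1 + t*p)^n - 1 - int n * t * p)"
    by (simp add: algebra_simps)
  show ?case unfolding eq by (rule dvd_add[OF Suc a])
qed

lemma mult_one:
  fixes p y :: int
  assumes "prime p" "odd p" "[y = 1] (mod p)"
  shows "multiplicity p (\<Sum>i<nat p. y^i) = 1"
proof -
  define S where "S = (\<Sum>i<nat p. y^i)"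
  have "p dvd y - 1" using assms(3) by (simp add: cong_iff_dvd_diff)
  then obtain t where "y - 1 = p * t" by blast
  then have t: "y = 1 + t*p" by (simp add: algebra_simps)
  have p0: "p > 1" using assms prime_gt_1_int by blast
  have h1: "p^2 dvd 2 * S - 2 * p - t * p * p * (p - 1)"
    using sum_cong2[of p t "nat p"] p0 t unfolding S_def by simp
  have h2: "p^2 dvd t * p * p * (p - 1)" by (simp add: power2_eq_square)
  have eq: "2 * (S - p) = (2 * S - 2 * p - t * p * p * (p - 1)) + t * p * p * (p - 1)"
    by (simp add: algebra_simps)
  have "p^2 dvd 2 * (S - p)" unfolding eq by (rule dvd_add[OF h1 h2])
  moreover have "coprime (p^2) 2" using assms(2) by simp
  ultimately have d: "p^2 dvd S - p"
    using coprime_dvd_mult_right_iff by blast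
  have "p dvd p^2" by (simp add: power2_eq_square)
  then have "p dvd S - p" using d by (rule dvd_trans)
  then have "p dvd (S - p) + p" by (rule dvd_add) simp
  then have pS: "p dvd S" by simp
  have npS: "\<not> p^2 dvd S"
  proof
    assume "p^2 dvd S"
    then have "p^2 dvd S - (S - p)" using d by (rule dvd_diff)
    then have "p^2 dvd p" by simp
    then have "p^2 \<le> p" using p0 by (intro zdvd_imp_le) auto
    moreover have "p * 1 < p * p" using p0 by (intro mult_strict_left_mono) auto
    ultimately show False by (simp add: power2_eq_square)
  qed
  show ?thesis unfolding S_def[symmetric]
    using multiplicity_eqI[of p 1 S] pS npS by (simp add: numeral_2_eq_2)
qed

lemma lte:
  fixes p x :: int
  assumes p: "prime p" "odd p" and x: "[x = 1] (mod p)" "x > 0"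
  shows "n > 0 \<Longrightarrow> multiplicity p (\<Sum>j<n. x^j) = multiplicity p (int n)"
proof (induction n rule: less_induct)
  case (less n)
  have p0: "p > 1" using p prime_gt_1_int by blast
  show ?case
  proof (cases "p dvd int n")
    case False
    have "[(\<Sum>j<n. x^j) = (\<Sum>j<n. 1)] (mod p)"
      by (rule cong_sum) (use cong_pow[OF x(1)] in simp)
    then have "[(\<Sum>j<n. x^j) = int n] (mod p)" by simp
    then have "\<not> p dvd (\<Sum>j<n. x^j)" using False cong_dvd_iff by blast
    then show ?thesis using False by (simp add: not_dvd_imp_multiplicity_0)
  next
    case True
    then obtain m' where m': "int n = p * m'" by blast
    define m where "m = nat m'"
    have "0 < p * m'" using m' less.prems by simp
    then have mpos: "m' > 0" using p0 by (simp add: zero_less_mult_iff)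
    have "int n = int (m * nat p)" using m' mpos p0 by (simp add: m_def)
    then have nm: "n = m * nat p" by (simp only: of_nat_eq_iff)
    have m0: "m > 0" using mpos m_def by simp
    have "m * 1 < m * nat p" using m0 p0 by (intro mult_strict_left_mono) auto
    then have mlt: "m < n" using nm by simp
    have spl: "(\<Sum>j<n. x^j) = (\<Sum>j<m. x^j) * (\<Sum>i<nat p. (x^m)^i)"
      unfolding nm by (rule geom_split)
    have xm: "[x^m = 1] (mod p)" using cong_pow[OF x(1), of m] by simp
    have T1: "multiplicity p (\<Sum>i<nat p. (x^m)^i) = 1" by (rule mult_one[OF p xm])
    have Sne: "(\<Sum>j<m. x^j) \<noteq> 0"
    proof -
      have "(\<Sum>j<m. x^j) > 0" using m0 x(2) by (intro sum_pos) auto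
      then show ?thesis by simp
    qed
    have Tne: "(\<Sum>i<nat p. (x^m)^i) \<noteq> 0" using T1 by auto
    have "multiplicity p (\<Sum>j<n. x^j) = multiplicity p (int m) + 1"
      unfolding spl using prime_elem_multiplicity_mult_distrib[OF prime_imp_prime_elem[OF p(1)] Sne Tne]
        T1 less.IH[OF mlt m0] by simp
    moreover have "multiplicity p (int n) = 1 + multiplicity p (int m)"
    proof -
      have "int n = p * int m" using m' mpos m_def by simp
      moreover have "multiplicity p p = 1"
        using multiplicity_prime_power[OF prime_imp_prime_elem[OF p(1)], of 1] by simp
      ultimately show ?thesis
        using prime_elem_multiplicity_mult_distrib[OF prime_imp_prime_elem[OF p(1)], of p "int m"] p0 m0 by simp
    qed
    ultimately show ?thesis by simp
  qed
qed


lemma poly_I: "poly (I_poly N) b = (\<Sum>j<N. (b^3)^j)"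
  unfolding I_poly_def by (simp add: poly_sum poly_monom power_mult)

theorem mainTheorem9:
  fixes a b c :: int and r z Y Z N e :: nat
  assumes "prime c" and "r \<ge> 1" and "c = 2 ^ r * 3 + 1"
    and "a > 1" and "b > 1"
    and "coprime a b" and "coprime a c" and "coprime b c"
    and "e_pm c b = 3"
    and "z > 0" and "Y > 0" and "Z > 0" and "z \<le> Z"
    and "[Y = 4] (mod 6)"
    and "a + b = c ^ z" and "a + b ^ Y = c ^ Z"
    and "Y = 1 + 3 * N" and "odd N"
    and "e = multiplicity c (int N)"
  shows "e < z \<and> (\<exists>K :: int. K > 0 \<and> gcd K c = 1 \<and>
           b ^ 2 + b + 1 = K * c ^ (z - e) \<and>
           b * (b - 1) * poly (I_poly N) b * K = c ^ e * (c ^ (Z - z) - 1))"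
proof -
  note cp = assms(1)
  have "(2::int) ^ r \<ge> 2 ^ 1" using assms(2) by (intro power_increasing) auto
  then have c7: "c \<ge> 7" using assms(3) by simp
  have codd: "odd c" using assms(2,3) by simp
  have N0: "N > 0" using assms(18) by (cases N) auto
  define J where "J = (\<Sum>j<N. (b^3)^j)"
  define S where "S = b^2 + b + 1"
  have bY: "b ^ Y = b * (b^3)^N" using assms(17) by (simp add: power_add power_mult)
  have d1: "c dvd a + b" using assms(10,15) by (metis dvd_power dvd_refl)
  have d2: "c dvd a + b ^ Y" using assms(12,16) by (metis dvd_power dvd_refl)
  have "c dvd (a + b ^ Y) - (a + b)" using d2 d1 by (rule dvd_diff)
  then have "c dvd b * ((b^3)^N - 1)" using bY by (simp add: algebra_simps)
  then have "c dvd (b^3)^N - 1"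
    using assms(8) by (metis coprime_commute coprime_dvd_mult_right_iff)
  then have b3N: "[(b^3)^N = 1] (mod c)" by (simp add: cong_iff_dvd_diff)
  define P where "P = (\<lambda>k::nat. k > 0 \<and> ([b ^ k = 1] (mod c) \<or> [b ^ k = -1] (mod c)))"
  have P3N: "P (3*N)" unfolding P_def using N0 b3N by (simp add: power_mult)
  have eL: "(LEAST k. P k) = 3" using assms(9) unfolding e_pm_def P_def by simp
  have P3: "P 3" using LeastI[of P, OF P3N] eL by simp
  have nP1: "\<not> P 1" using not_less_Least[of 1 P] eL by simp
  have b3: "[b^3 = 1] (mod c)"
  proof -
    have "\<not> [b^3 = -1] (mod c)"
    proof
      assume "[b^3 = -1] (mod c)"
      then have "[(b^3)^N = (-1)^N] (mod c)" by (rule cong_pow)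
      then have "[(b^3)^N = -1] (mod c)" using assms(18) by simp
      then have "[1 = -1] (mod c)" using b3N by (metis cong_sym cong_trans)
      then have "c dvd 2" by (simp add: cong_iff_dvd_diff)
      then have "c \<le> 2" by (intro zdvd_imp_le) auto
      then show False using c7 by simp
    qed
    then show ?thesis using P3 unfolding P_def by auto
  qed
  have nb1: "\<not> c dvd b - 1" using nP1 unfolding P_def by (simp add: cong_iff_dvd_diff)
  have "c dvd b^3 - 1" using b3 by (simp add: cong_iff_dvd_diff)
  moreover have "b^3 - 1 = (b - 1) * S" unfolding S_def by (simp add: algebra_simps power2_eq_square power3_eq_cube)
  ultimately have cS: "c dvd S" using nb1 cp by (metis prime_dvd_mult_iff)
  have geo: "(b^3)^N - 1 = (b^3 - 1) * J" unfolding J_def by (rule power_diff_1_eq)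
  have ZZ: "Z > z"
  proof (rule ccontr)
    assume "\<not> Z > z"
    then have "Z = z" using assms(13) by simp
    then have "b ^ Y = b" using assms(15,16) by simp
    moreover have "b ^ 1 < b ^ Y" using assms(5,17) N0 by (intro power_strict_increasing) auto
    ultimately show False by simp
  qed
  have main: "b * (b - 1) * S * J = c ^ z * (c ^ (Z - z) - 1)"
  proof -
    have "c ^ Z = c ^ z * c ^ (Z - z)" using assms(13) by (simp add: power_add[symmetric])
    then have "c ^ z * (c ^ (Z - z) - 1) = b ^ Y - b" using assms(15,16) by (simp add: algebra_simps)
    also have "\<dots> = b * ((b^3)^N - 1)" using bY by (simp add: algebra_simps)
    also have "\<dots> = b * (b - 1) * S * J" using geo \<open>b^3 - 1 = (b - 1) * S\<close> by simp
    finally show ?thesis by simp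
  qed
  have pe: "prime_elem c" using cp by (rule prime_imp_prime_elem)
  have Spos: "S > 0" unfolding S_def using assms(5) by (simp add: add_pos_pos)
  have Jpos: "J > 0" unfolding J_def using N0 assms(5) by (intro sum_pos) auto
  have cZ: "c ^ (Z - z) - 1 > 0"
  proof -
    have "c ^ 1 \<le> c ^ (Z - z)" using ZZ c7 by (intro power_increasing) auto
    then show ?thesis using c7 by simp
  qed
  have mb: "multiplicity c b = 0"
  proof -
    have "\<not> c dvd b" using assms(8) cp
      by (metis coprime_commute coprime_absorb_right not_prime_unit)
    then show ?thesis by (rule not_dvd_imp_multiplicity_0)
  qed
  have mb1: "multiplicity c (b - 1) = 0" using nb1 by (rule not_dvd_imp_multiplicity_0)
  have mJ: "multiplicity c J = e"
    unfolding J_def assms(19) using lte[OF cp codd b3 _ N0] assms(5) by simp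
  have mZ: "multiplicity c (c ^ (Z - z) - 1) = 0"
  proof (rule not_dvd_imp_multiplicity_0)
    show "\<not> c dvd c ^ (Z - z) - 1"
    proof
      assume h: "c dvd c ^ (Z - z) - 1"
      have "c dvd c ^ (Z - z)" using ZZ by (simp add: dvd_power)
      then have "c dvd c ^ (Z - z) - (c ^ (Z - z) - 1)" using h by (rule dvd_diff)
      then have "c dvd 1" by simp
      then show False using cp by (simp add: not_prime_unit)
    qed
  qed
  have "multiplicity c (b * (b - 1) * S * J) = multiplicity c S + e"
    using prime_elem_multiplicity_mult_distrib[OF pe] mb mb1 mJ Spos Jpos assms(5)
    by (simp add: prime_elem_multiplicity_mult_distrib[OF pe])
  moreover have "multiplicity c (c ^ z * (c ^ (Z - z) - 1)) = z"
    using prime_elem_multiplicity_mult_distrib[OF pe, of "c^z" "c ^ (Z - z) - 1"] cZ mZ c7 pe by simp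
  ultimately have mS: "multiplicity c S + e = z" using main by simp
  have Sne: "S \<noteq> 0" using Spos by simp
  have nu: "\<not> is_unit c" using cp not_prime_unit by blast
  have "multiplicity c S \<noteq> 0"
    using multiplicity_eq_zero_iff[OF Sne nu] cS by simp
  then have ez: "e < z" using mS by simp
  obtain K where K: "S = c ^ multiplicity c S * K" "\<not> c dvd K"
    by (rule multiplicity_decompose'[OF Sne nu])
  have mSe: "multiplicity c S = z - e" using mS by simp
  have cpow: "c ^ (z - e) > 0" using c7 by simp
  have Kpos: "K > 0" using K(1) Spos cpow mSe by (metis zero_less_mult_pos)
  have gK: "gcd K c = 1"
    using prime_imp_coprime[OF cp K(2)] by (simp add: coprime_iff_gcd_eq_1 gcd.commute)
  have SK: "S = K * c ^ (z - e)" using K(1) mSe by simp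
  have "c ^ (z - e) * (b * (b - 1) * J * K) = c ^ (z - e) * (c ^ e * (c ^ (Z - z) - 1))"
  proof -
    have "c ^ (z - e) * (b * (b - 1) * J * K) = b * (b - 1) * S * J" using SK by simp
    also have "\<dots> = c ^ z * (c ^ (Z - z) - 1)" by (rule main)
    also have "c ^ z = c ^ (z - e) * c ^ e" using ez by (simp add: power_add[symmetric])
    finally show ?thesis by (simp only: mult.assoc)
  qed
  note eqc = this
  have cne: "c ^ (z - e) \<noteq> 0" using cpow by linarith
  have fin: "b * (b - 1) * J * K = c ^ e * (c ^ (Z - z) - 1)"
    by (rule mult_left_cancel[THEN iffD1, OF cne eqc])
  have fin2: "b * (b - 1) * poly (I_poly N) b * K = c ^ e * (c ^ (Z - z) - 1)"
    using fin by (simp only: poly_I J_def)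
  have SK2: "b ^ 2 + b + 1 = K * c ^ (z - e)" using SK by (simp only: S_def)
  show ?thesis using ez Kpos gK SK2 fin2 by (intro conjI exI[where x=K]) simp_all
qed

end
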